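(* Let $H$ be the group defined below (with sets $A_\alpha=\{n\in\omega:\eta_\alpha(n)=1\}$), let $0\to T\to G\xrightarrow{\varphi}H\to 0$ be a balanced exact sequence with $T$ a torsion group (viewed as a subgroup of $G$), and fix elements $g_\alpha\in G$ with $\varphi(g_\alpha)=y_\alpha$ ($\alpha<\kappa$) and $\tilde x_n\in G$ with $\varphi(\tilde x_n)=x_n$ ($n\in\omega$). For $\alpha<\kappa$ and $t\in T$ let $R_{\alpha,t}=\{n\in A_\alpha : g_\alpha-t-\tilde x_n \text{ is not divisible by } p_n \text{ in } G\}$. Let $\alpha<\kappa$ and $t\in T$ be such that $R_{\alpha,t}$ is finite. Then there exists $t_\alpha\in T$ such that $R_{\alpha,t_\alpha}=\emptyset$.
   Context: All groups are abelian. A pure subgroup $A$ of a torsion-free group $G$ is balanced if every coset $g+A$ contains an element $g+a$ ($a\in A$) whose characteristic is $\geq$ that of $g+x$ for all $x\in A$; an exact sequence $0\to A\to G\to C\to0$ is balanced exact if the image of $A$ is balanced in $G$. Setting: $\kappa$ is an uncountable cardinal, $\eta_\alpha:\omega\to 2$ ($\alpha<\kappa$) are the Cohen reals added by the forcing of finite partial functions $\kappa\times\omega\to 2$ (the lemma is considered in the generic extension). Fix primes $p_0<p_1<\cdots$; let $W=\bigoplus_{n\in\omega}\mathbb{Q}x_n\oplus\bigoplus_{\alpha<\kappa}\mathbb{Q}y_\alpha$ on independent elements, $F=\bigoplus_n\mathbb{Z}x_n\oplus\bigoplus_{\alpha<\kappa}\mathbb{Z}y_\alpha$, and $H$ the subgroup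 of $W$ generated by $F$ and all $p_n^{-1}(y_\alpha-x_n)$ with $\eta_\alpha(n)=1$. *)

theory Defs
  imports Main "HOL-Library.Extended_Nat" "HOL-Library.Countable_Set"
    "HOL-Computational_Algebra.Primes" "HOL-Library.Function_Algebras"
begin

fun nsmul :: "nat \<Rightarrow> 'a::monoid_add \<Rightarrow> 'a" where
  "nsmul 0 g = 0"
| "nsmul (Suc n) g = g + nsmul n g"

text \<open>g is divisible by m in the ambient group (the whole type).\<close>
definition divisible_by :: "nat \<Rightarrow> 'a::monoid_add \<Rightarrow> bool" where
  "divisible_by m g \<longleftrightarrow> (\<exists>h. g = nsmul m h)"

definition p_height :: "nat \<Rightarrow> 'a::monoid_add \<Rightarrow> enat" where
  "p_height p g = Sup (enat ` {k. divisible_by (p ^ k) g})"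

definition char_le :: "'a::monoid_add \<Rightarrow> 'a \<Rightarrow> bool" where
  "char_le g h \<longleftrightarrow> (\<forall>p::nat. prime p \<longrightarrow> p_height p g \<le> p_height p h)"

definition is_subgroup :: "'a::ab_group_add set \<Rightarrow> bool" where
  "is_subgroup A \<longleftrightarrow> 0 \<in> A \<and> (\<forall>a\<in>A. \<forall>b\<in>A. a - b \<in> A)"

definition pure_subgroup :: "'a::ab_group_add set \<Rightarrow> bool" where
  "pure_subgroup A \<longleftrightarrow> is_subgroup A \<and>
     (\<forall>n a. a \<in> A \<longrightarrow> divisible_by n a \<longrightarrow> (\<exists>b\<in>A. a = nsmul n b))"

definition balanced :: "'a::ab_group_add set \<Rightarrow> bool" where
  "balanced A \<longleftrightarrow> pure_subgroup A \<and>
     (\<forall>g. \<exists>a\<in>A. \<forall>x\<in>A. char_le (g + x) (g + a))"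

definition torsion_set :: "'a::ab_group_add set \<Rightarrow> bool" where
  "torsion_set A \<longleftrightarrow> (\<forall>a\<in>A. \<exists>n>0. nsmul n a = 0)"

text \<open>The Q-vector space W with basis x_n (index Inl n) and y_alpha (index Inr alpha);
  elements are functions to rat (H consists of finitely supported ones).\<close>
definition xW :: "nat \<Rightarrow> (nat + 'k \<Rightarrow> rat)" where
  "xW n = (\<lambda>i. if i = Inl n then 1 else 0)"

definition yW :: "'k \<Rightarrow> (nat + 'k \<Rightarrow> rat)" where
  "yW a = (\<lambda>i. if i = Inr a then 1 else 0)"

inductive_set gen_subgroup :: "'a::ab_group_add set \<Rightarrow> 'a set" for S where
  gen_zero: "0 \<in> gen_subgroup S"
| gen_base: "s \<in> S \<Longrightarrow> s \<in> gen_subgroup S"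
| gen_diff: "a \<in> gen_subgroup S \<Longrightarrow> b \<in> gen_subgroup S \<Longrightarrow> a - b \<in> gen_subgroup S"

definition Hgrp :: "(nat \<Rightarrow> nat) \<Rightarrow> ('k \<Rightarrow> nat \<Rightarrow> bool) \<Rightarrow> (nat + 'k \<Rightarrow> rat) set" where
  "Hgrp p \<eta> = gen_subgroup (range xW \<union> range yW \<union>
     {(\<lambda>i. (1 / of_nat (p n)) * (yW a i - xW n i)) | a n. \<eta> a n})"

definition R_set :: "(nat \<Rightarrow> nat) \<Rightarrow> ('k \<Rightarrow> nat \<Rightarrow> bool) \<Rightarrow> ('k \<Rightarrow> 'g::ab_group_add)
    \<Rightarrow> (nat \<Rightarrow> 'g) \<Rightarrow> 'k \<Rightarrow> 'g \<Rightarrow> nat set" where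
  "R_set p \<eta> g xt a t = {n. \<eta> a n \<and> \<not> divisible_by (p n) (g a - t - xt n)}"

end

theory Submission
  imports Defs "HOL-Number_Theory.Cong"
begin

lemma nsmul_add: "nsmul (a + b) g = nsmul a g + nsmul b (g::'a::ab_group_add)"
  by (induction a) (auto simp: add.assoc)

lemma nsmul_mult: "nsmul (a * b) g = nsmul a (nsmul b (g::'a::ab_group_add))"
  by (induction a) (auto simp: nsmul_add)

lemma nsmul_zero[simp]: "nsmul n (0::'a::ab_group_add) = 0"
  by (induction n) auto

lemma nsmul_one[simp]: "nsmul 1 (g::'a::ab_group_add) = g"
  by simp

lemma nsmul_plus: "nsmul n (g + h) = nsmul n g + nsmul n (h::'a::ab_group_add)"
  by (induction n) (auto simp: algebra_simps)

lemma nsmul_minus: "nsmul n (- g) = - nsmul n (g::'a::ab_group_add)"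
  by (induction n) (auto simp: algebra_simps)

lemma nsmul_diff: "nsmul n (g - h) = nsmul n g - nsmul n (h::'a::ab_group_add)"
  using nsmul_plus[of n g "-h"] nsmul_minus[of n h] by simp

lemma nsmul_mod: assumes "nsmul m v = (0::'a::ab_group_add)"
  shows "nsmul k v = nsmul (k mod m) v"
proof -
  have "k = m * (k div m) + k mod m" by simp
  then have "nsmul k v = nsmul (m * (k div m)) v + nsmul (k mod m) v"
    by (metis nsmul_add)
  also have "nsmul (m * (k div m)) v = 0"
    by (simp add: mult.commute[of m] nsmul_mult assms)
  finally show ?thesis by simp
qed

lemma div_add: "divisible_by p a \<Longrightarrow> divisible_by p b \<Longrightarrow> divisible_by p (a + (b::'a::ab_group_add))"
  unfolding divisible_by_def by (metis nsmul_plus)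

lemma div_diff: "divisible_by p a \<Longrightarrow> divisible_by p b \<Longrightarrow> divisible_by p (a - (b::'a::ab_group_add))"
  unfolding divisible_by_def by (metis nsmul_diff)

lemma div_zero: "divisible_by p (0::'a::ab_group_add)"
  unfolding divisible_by_def by (metis nsmul_zero)

lemma div_nsmul: "divisible_by p (nsmul p (h::'a::ab_group_add))"
  unfolding divisible_by_def by blast

lemma div_sum: "finite S \<Longrightarrow> (\<And>n. n \<in> S \<Longrightarrow> divisible_by p (f n)) \<Longrightarrow>
   divisible_by p (sum f S :: 'a::ab_group_add)"
  by (induction S rule: finite_induct) (auto intro: div_add div_zero)

lemma lemB:
  fixes v :: "'a::ab_group_add"
  assumes "nsmul m v = 0" "coprime p m"
  shows "divisible_by p v"
proof -
  obtain c where c: "[p * c = Suc 0] (mod m)" using cong_solve_coprime_nat[OF assms(2)] by blast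
  have "nsmul (p * c) v = nsmul (p*c mod m) v" by (rule nsmul_mod[OF assms(1)])
  also have "\<dots> = nsmul (Suc 0 mod m) v" using c unfolding cong_def by simp
  also have "\<dots> = v"
  proof (cases "m = 1")
    case True
    then show ?thesis using assms(1) by simp
  next
    case False
    then show ?thesis using nsmul_mod[OF assms(1), of 1] by simp
  qed
  finally have "v = nsmul p (nsmul c v)" by (simp add: nsmul_mult)
  then show ?thesis unfolding divisible_by_def by blast
qed

lemma lemA:
  fixes s :: "'a::ab_group_add"
  assumes "nsmul m s = 0" "m > 0" "prime (q::nat)"
  shows "\<exists>k. divisible_by q (s - nsmul k s) \<and>
           (\<forall>p. prime p \<longrightarrow> p \<noteq> q \<longrightarrow> divisible_by p (nsmul k s))"
proof -
  obtain r where r: "m = q ^ multiplicity q m * r" "\<not> q dvd r"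
  proof -
    have "m \<noteq> 0" "\<not> is_unit q" using assms(2,3) not_prime_unit by auto
    then show ?thesis using multiplicity_decompose'[of m q] that by blast
  qed
  define a where "a = multiplicity q m"
  have "coprime r q" using r(2) assms(3)
    by (metis coprime_commute prime_imp_coprime)
  then obtain f where f: "[r * f = Suc 0] (mod q)" using cong_solve_coprime_nat by blast
  have q1: "q > 1" using assms(3) prime_gt_1_nat by blast
  then have "r * f mod q = 1" using f unfolding cong_def by simp
  then have rf: "r * f = q * (r * f div q) + 1" by (metis div_mult_mod_eq add.commute mult.commute)
  have "nsmul (r*f) s = nsmul q (nsmul (r * f div q) s) + s"
    by (subst rf) (simp add: nsmul_add nsmul_mult)
  then have "s - nsmul (r*f) s = nsmul q (- nsmul (r * f div q) s)"
    by (simp add: nsmul_minus)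
  then have d1: "divisible_by q (s - nsmul (r*f) s)" unfolding divisible_by_def by blast
  have kill: "nsmul (q ^ a) (nsmul (r*f) s) = 0"
  proof -
    have "nsmul (q ^ a) (nsmul (r*f) s) = nsmul f (nsmul m s)"
    proof -
      have "q ^ a * (r * f) = f * m" unfolding a_def using r(1) by (metis mult.assoc mult.commute)
      then show ?thesis by (metis nsmul_mult)
    qed
    then show ?thesis using assms(1) by simp
  qed
  have "\<forall>p. prime p \<longrightarrow> p \<noteq> q \<longrightarrow> divisible_by p (nsmul (r*f) s)"
  proof (intro allI impI)
    fix p :: nat assume "prime p" "p \<noteq> q"
    then have "coprime p q" using assms(3) by (simp add: primes_coprime)
    then have "coprime p (q ^ a)" by simp
    then show "divisible_by p (nsmul (r*f) s)" by (rule lemB[OF kill])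
  qed
  with d1 show ?thesis by blast
qed

theorem lemma4p5:
  fixes p :: "nat \<Rightarrow> nat" and \<eta> :: "'k \<Rightarrow> nat \<Rightarrow> bool"
    and T :: "'g::ab_group_add set" and \<phi> :: "'g \<Rightarrow> (nat + 'k \<Rightarrow> rat)"
    and g :: "'k \<Rightarrow> 'g" and xt :: "nat \<Rightarrow> 'g" and \<alpha> :: 'k and t :: 'g
  assumes "uncountable (UNIV :: 'k set)"
    and "strict_mono p" and "\<forall>n. prime (p n)"
    and "is_subgroup T" and "torsion_set T"
    and "\<forall>a b. \<phi> (a + b) = \<phi> a + \<phi> b"
    and "range \<phi> = Hgrp p \<eta>"
    and "{a. \<phi> a = 0} = T"
    and "balanced T"
    and "\<forall>\<beta>. \<phi> (g \<beta>) = yW \<beta>"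
    and "\<forall>n. \<phi> (xt n) = xW n"
    and "t \<in> T"
    and "finite (R_set p \<eta> g xt \<alpha> t)"
  shows "\<exists>t'\<in>T. R_set p \<eta> g xt \<alpha> t' = {}"
proof -
  note add = assms(6)
  have phi0: "\<phi> 0 = 0" using add[rule_format, of 0 0] by simp
  have phineg: "\<phi> (- a) = - \<phi> a" for a using add[rule_format, of a "-a"] phi0
    by (simp add: eq_neg_iff_add_eq_0 add.commute)
  have phidiff: "\<phi> (a - b) = \<phi> a - \<phi> b" for a b
    using add[rule_format, of a "-b"] phineg[of b] by simp
  have phins: "\<phi> (nsmul n a) = nsmul n (\<phi> a)" for n a
    by (induction n) (auto simp: phi0 add)
  have nsfun: "nsmul n F i = of_nat n * F i" for n and F :: "nat + 'k \<Rightarrow> rat" and i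
    by (induction n arbitrary: i) (auto simp: algebra_simps)
  have Tsub: "0 \<in> T" "\<And>a b. a \<in> T \<Longrightarrow> b \<in> T \<Longrightarrow> a - b \<in> T"
    using assms(4) unfolding is_subgroup_def by auto
  have Tneg: "a \<in> T \<Longrightarrow> - a \<in> T" for a using Tsub(2)[OF Tsub(1), of a] by simp
  have Tadd: "a \<in> T \<Longrightarrow> b \<in> T \<Longrightarrow> a + b \<in> T" for a b
    using Tsub(2)[of a "-b"] Tneg[of b] by simp
  have Tns: "a \<in> T \<Longrightarrow> nsmul n a \<in> T" for a n
    by (induction n) (auto simp: Tsub Tadd)
  have Tsum: "finite S \<Longrightarrow> (\<And>n. n \<in> S \<Longrightarrow> f n \<in> T) \<Longrightarrow> sum f S \<in> T" for S f
    by (induction S rule: finite_induct) (auto simp: Tsub Tadd)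
  have pinj: "inj p" using assms(2) strict_mono_imp_inj_on by blast
  define d where "d n = g \<alpha> - t - xt n" for n
  have step1: "\<exists>s\<in>T. divisible_by (p n) (d n + s)" if "\<eta> \<alpha> n" for n
  proof -
    define w where "w = (\<lambda>i. (1 / of_nat (p n)) * (yW \<alpha> i - xW n i :: rat))"
    have "w \<in> Hgrp p \<eta>" unfolding Hgrp_def w_def
      by (rule gen_base) (use that in blast)
    then obtain k where k: "\<phi> k = w" using assms(7) by (metis rangeE)
    have pn00: "p n \<noteq> 0" using assms(3) by (metis not_prime_0)
    then have pn0: "(of_nat (p n) :: rat) \<noteq> 0" by simp
    have "nsmul (p n) w = yW \<alpha> - xW n"
      by (rule ext) (simp add: nsfun w_def pn0 pn00)
    have "\<phi> t = 0" using assms(8,12) by blast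
    define s where "s = nsmul (p n) k - d n"
    have "\<phi> s = 0" unfolding s_def d_def
      using \<open>nsmul (p n) w = yW \<alpha> - xW n\<close> \<open>\<phi> t = 0\<close> assms(10,11)
      by (simp add: phidiff phins k)
    then have "s \<in> T" using assms(8) by blast
    moreover have "d n + s = nsmul (p n) k" unfolding s_def by simp
    ultimately show ?thesis using div_nsmul by metis
  qed
  define R where "R = R_set p \<eta> g xt \<alpha> t"
  have Rfin: "finite R" using assms(13) R_def by simp
  have RA: "n \<in> R \<Longrightarrow> \<eta> \<alpha> n" for n unfolding R_def R_set_def by simp
  have notR: "\<eta> \<alpha> n \<Longrightarrow> n \<notin> R \<Longrightarrow> divisible_by (p n) (d n)" for n
    unfolding R_def R_set_def d_def by simp
  have step2: "\<exists>v\<in>T. divisible_by (p n) (d n + v) \<and>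
      (\<forall>q. prime q \<longrightarrow> q \<noteq> p n \<longrightarrow> divisible_by q v)" if hn: "\<eta> \<alpha> n" for n
  proof -
    obtain s where s: "s \<in> T" "divisible_by (p n) (d n + s)" using step1[OF hn] by blast
    obtain m where m: "m > 0" "nsmul m s = 0" using assms(5) s(1) unfolding torsion_set_def by blast
    obtain k where k: "divisible_by (p n) (s - nsmul k s)"
      "\<forall>q. prime q \<longrightarrow> q \<noteq> p n \<longrightarrow> divisible_by q (nsmul k s)"
      using lemA[OF m(2) m(1), of "p n"] assms(3) by blast
    have "d n + nsmul k s = (d n + s) - (s - nsmul k s)" by simp
    then have "divisible_by (p n) (d n + nsmul k s)" using div_diff[OF s(2) k(1)] by simp
    then show ?thesis using k(2) Tns[OF s(1)] by blast
  qed
  then obtain v where v: "\<And>n. \<eta> \<alpha> n \<Longrightarrow> v n \<in> T \<and> divisible_by (p n) (d n + v n) \<and>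
      (\<forall>q. prime q \<longrightarrow> q \<noteq> p n \<longrightarrow> divisible_by q (v n))"
    by metis
  define t' where "t' = t - sum v R"
  have "t' \<in> T" unfolding t'_def using Tsub(2)[OF assms(12) Tsum[OF Rfin]] v RA by blast
  moreover have "R_set p \<eta> g xt \<alpha> t' = {}"
  proof -
    have "divisible_by (p m) (g \<alpha> - t' - xt m)" if "\<eta> \<alpha> m" for m
    proof -
      have eq: "g \<alpha> - t' - xt m = d m + sum v R" unfolding t'_def d_def by simp
      have other: "divisible_by (p m) (sum v (R - {m}))"
      proof (rule div_sum)
        show "finite (R - {m})" using Rfin by simp
      next
        fix n assume n: "n \<in> R - {m}"
        then have "p m \<noteq> p n" using pinj by (auto dest: injD)
        then show "divisible_by (p m) (v n)" using v[OF RA] n assms(3) by blast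
      qed
      show ?thesis
      proof (cases "m \<in> R")
        case True
        then have "sum v R = v m + sum v (R - {m})" using Rfin by (simp add: sum.remove)
        then have "g \<alpha> - t' - xt m = (d m + v m) + sum v (R - {m})" using eq by (simp add: algebra_simps)
        then show ?thesis using div_add v[OF that] other by metis
      next
        case False
        then have "sum v R = sum v (R - {m})" by simp
        then show ?thesis using eq div_add notR[OF that False] other by metis
      qed
    qed
    then show ?thesis unfolding R_set_def by blast
  qed
  ultimately show ?thesis by blast
qed

end
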